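(* Let $K$ be a compact Hausdorff space with at least two points and let $\mathcal{A}$ be a non-empty subalgebra of $C(K,\mathbb{C})$. Suppose there is a subset $K_0\subset K$ such that for every $f\in C(K,\mathbb{C})$ and every $(x,y)\in K_0^2$ there exists a sequence $(f_n^{x,y})_{n\ge0}\subset\mathcal{A}$ with $f_n^{x,y}(t)\to f(t)$ as $n\to+\infty$ for $t\in\{x,y\}$. Suppose moreover that: (1) $\mathcal{A}$ separates the points of $K\setminus K_0$ (for distinct $x,y\in K\setminus K_0$ there is $g\in\mathcal{A}$ with $g(x)\neq g(y)$) and separates any point of $K_0$ from any (distinct) point of $K$; (2) at least one of the following holds: (2a) for every $x\in K\setminus K_0$ there exists $g\in\mathcal{A}$ with $g(x)\neq 0$, or (2b) $\mathcal{A}$ contains all constant functions; and (3) for every $g\in\mathcal{A}$ its complex conjugate $\bar g=\mathrm{Re}(g)-i\,\mathrm{Im}(g)$ belongs to $\mathcal{A}$. Then $\mathcal{A}$ is dense in $C(K,\mathbb{C})$ for the uniform norm.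
   Context: $C(K,\mathbb{C})$ is the algebra of continuous complex-valued functions on $K$ with the uniform norm $\|g\|=\sup_{x\in K}|g(x)|$; density and closure refer to this norm. *)

theory Defs
  imports "HOL-Analysis.Analysis"
begin

definition csubalgebra :: "'a::topological_space set \<Rightarrow> ('a \<Rightarrow> complex) set \<Rightarrow> bool" where
  "csubalgebra K A \<longleftrightarrow>
     (\<forall>f\<in>A. continuous_on K f) \<and>
     (\<forall>f\<in>A. \<forall>g\<in>A. (\<lambda>x. f x + g x) \<in> A) \<and>
     (\<forall>f\<in>A. \<forall>g\<in>A. (\<lambda>x. f x * g x) \<in> A) \<and>
     (\<forall>c. \<forall>f\<in>A. (\<lambda>x. c * f x) \<in> A)"

definition uniformly_dense :: "'a::topological_space set \<Rightarrow> ('a \<Rightarrow> complex) set \<Rightarrow> bool" where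
  "uniformly_dense K A \<longleftrightarrow>
     (\<forall>f. continuous_on K f \<longrightarrow> (\<forall>e>0. \<exists>g\<in>A. \<forall>x\<in>K. cmod (f x - g x) < e))"

end

theory Submission
  imports Defs
begin

lemma corollary1_real:
  fixes K K0 :: "'a::t2_space set" and A :: "('a \<Rightarrow> complex) set"
  assumes cK: "compact K"
    and sub: "csubalgebra K A" and ne: "A \<noteq> {}"
    and sep: "\<And>x y. x \<in> K \<Longrightarrow> y \<in> K \<Longrightarrow> x \<noteq> y \<Longrightarrow> \<exists>g\<in>A. g x \<noteq> g y"
    and nz: "\<And>x. x \<in> K \<Longrightarrow> \<exists>g\<in>A. g x \<noteq> 0"
    and cnjA: "\<forall>g\<in>A. (\<lambda>x. cnj (g x)) \<in> A"
    and f: "continuous_on K f" and e: "e > 0"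
  shows "\<exists>h. (\<lambda>x. complex_of_real (h x)) \<in> A \<and> (\<forall>x\<in>K. \<bar>f x - h x\<bar> < e)"
proof -
  define B where "B = {h::'a\<Rightarrow>real. (\<lambda>x. complex_of_real (h x)) \<in> A}"
  have contA: "\<And>g. g \<in> A \<Longrightarrow> continuous_on K g" using sub unfolding csubalgebra_def by blast
  have addA: "\<And>g h. g \<in> A \<Longrightarrow> h \<in> A \<Longrightarrow> (\<lambda>x. g x + h x) \<in> A" using sub unfolding csubalgebra_def by blast
  have multA: "\<And>g h. g \<in> A \<Longrightarrow> h \<in> A \<Longrightarrow> (\<lambda>x. g x * h x) \<in> A" using sub unfolding csubalgebra_def by blast
  have scalA: "\<And>c g. g \<in> A \<Longrightarrow> (\<lambda>x. c * g x) \<in> A" using sub unfolding csubalgebra_def by blast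
  have addB: "\<And>g h. g \<in> B \<Longrightarrow> h \<in> B \<Longrightarrow> (\<lambda>x. g x + h x) \<in> B"
    unfolding B_def using addA by (simp add: of_real_add)
  have multB: "\<And>g h. g \<in> B \<Longrightarrow> h \<in> B \<Longrightarrow> (\<lambda>x. g x * h x) \<in> B"
    unfolding B_def using multA by (simp add: of_real_mult)
  have scalB: "\<And>c g. g \<in> B \<Longrightarrow> (\<lambda>x. c * g x) \<in> B"
  proof -
    fix c :: real and g assume "g \<in> B"
    then have "(\<lambda>x. complex_of_real c * complex_of_real (g x)) \<in> A"
      unfolding B_def using scalA by blast
    then show "(\<lambda>x. c * g x) \<in> B" unfolding B_def by simp
  qed
  have contB: "\<And>h. h \<in> B \<Longrightarrow> continuous_on K h"
  proof -
    fix h assume "h \<in> B"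
    then have "continuous_on K (\<lambda>x. complex_of_real (h x))" unfolding B_def using contA by blast
    from continuous_on_Re[OF this] show "continuous_on K h" by simp
  qed
  have ReB: "\<And>g. g \<in> A \<Longrightarrow> (\<lambda>x. Re (g x)) \<in> B"
  proof -
    fix g assume g: "g \<in> A"
    have "(\<lambda>x. (1/2) * (g x + cnj (g x))) \<in> A" using g cnjA addA scalA by blast
    moreover have "(\<lambda>x. (1/2) * (g x + cnj (g x))) = (\<lambda>x. complex_of_real (Re (g x)))"
      by (auto simp: complex_eq_iff)
    ultimately show "(\<lambda>x. Re (g x)) \<in> B" unfolding B_def by simp
  qed
  have ImB: "\<And>g. g \<in> A \<Longrightarrow> (\<lambda>x. Im (g x)) \<in> B"
  proof -
    fix g assume g: "g \<in> A"
    have "(\<lambda>x. (-\<i>/2) * (g x + (-1) * cnj (g x))) \<in> A" using g cnjA addA scalA by blast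
    moreover have "(\<lambda>x. (-\<i>/2) * (g x + (-1) * cnj (g x))) = (\<lambda>x. complex_of_real (Im (g x)))"
      by (auto simp: complex_eq_iff)
    ultimately show "(\<lambda>x. Im (g x)) \<in> B" unfolding B_def by simp
  qed
  obtain g0 where "g0 \<in> A" using ne by blast
  then have zB: "(\<lambda>x. 0) \<in> B" using scalB[of "\<lambda>x. Re (g0 x)" 0] ReB by simp
  have sqB: "\<And>g. g \<in> A \<Longrightarrow> (\<lambda>x. (cmod (g x))^2) \<in> B"
  proof -
    fix g assume g: "g \<in> A"
    have "(\<lambda>x. g x * cnj (g x)) \<in> A" using g cnjA multA by blast
    moreover have "(\<lambda>x. complex_of_real ((cmod (g x))^2)) = (\<lambda>x. g x * cnj (g x))"
      by (simp only: complex_norm_square)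
    ultimately show "(\<lambda>x. (cmod (g x))^2) \<in> B" unfolding B_def by simp
  qed
  have sumB: "finite D \<Longrightarrow> (\<forall>d\<in>D. p d \<in> B) \<longrightarrow> (\<lambda>x. \<Sum>d\<in>D. p d x) \<in> B" for D and p :: "'b \<Rightarrow> 'a \<Rightarrow> real"
  proof (induction D rule: finite_induct)
    case empty then show ?case using zB by simp
  next
    case (insert d D) then show ?case using addB[of "p d" "\<lambda>x. \<Sum>d\<in>D. p d x"] by simp
  qed
  have "\<forall>x\<in>K. \<exists>U p. open U \<and> x \<in> U \<and> p \<in> B \<and> (\<forall>y. p y \<ge> 0) \<and> (\<forall>y\<in>K \<inter> U. p y > 0)"
  proof
    fix x assume x: "x \<in> K"
    obtain g where g: "g \<in> A" "g x \<noteq> 0" using nz[OF x] by blast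
    have "openin (top_of_set K) (K \<inter> g -` (-{0}))"
      using continuous_openin_preimage_gen[OF contA[OF g(1)], of "-{0}"] by (simp add: open_Compl)
    then obtain U where U: "open U" "K \<inter> g -` (-{0}) = K \<inter> U" unfolding openin_open by blast
    show "\<exists>U p. open U \<and> x \<in> U \<and> p \<in> B \<and> (\<forall>y. p y \<ge> 0) \<and> (\<forall>y\<in>K \<inter> U. p y > 0)"
      apply (rule exI[of _ U], rule exI[of _ "\<lambda>y. (cmod (g y))^2"])
      using U x g sqB[OF g(1)] by auto
  qed
  then obtain U p where Up: "\<And>x. x \<in> K \<Longrightarrow> open (U x) \<and> x \<in> U x \<and> p x \<in> B \<and> (\<forall>y. p x y \<ge> 0) \<and> (\<forall>y\<in>K \<inter> U x. p x y > 0)"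
    by metis
  obtain D where D: "D \<subseteq> K" "finite D" "K \<subseteq> (\<Union>c\<in>D. U c)"
    using compactE_image[OF cK, of K U] Up by blast
  define h0 where "h0 = (\<lambda>y. \<Sum>d\<in>D. p d y)"
  have h0B: "h0 \<in> B" unfolding h0_def using sumB[OF D(2), of p] Up D(1) by blast
  have h0pos: "\<And>y. y \<in> K \<Longrightarrow> h0 y > 0"
  proof -
    fix y assume y: "y \<in> K"
    then obtain d where d: "d \<in> D" "y \<in> U d" using D(3) by blast
    have "p d y > 0" using Up[of d] d y D(1) by blast
    moreover have "p d y \<le> h0 y" unfolding h0_def
      using D(2) d(1) Up D(1) by (intro member_le_sum) auto
    ultimately show "h0 y > 0" by linarith
  qed
  have h0c: "continuous_on K h0" using contB[OF h0B] .
  have "compact (h0 ` K)" using compact_continuous_image[OF h0c cK] .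
  then obtain M where M: "M > 0" "\<And>y. y \<in> K \<Longrightarrow> norm (h0 y) \<le> M"
    using compact_imp_bounded bounded_pos by (metis image_eqI)
  define P where "P = (\<lambda>g. \<exists>c h. h \<in> B \<and> g = (\<lambda>x. c + h x))"
  have fc: "continuous_on K (\<lambda>x. f x / h0 x)"
  proof -
    have "\<forall>x\<in>K. h0 x \<noteq> 0" using h0pos by (metis less_irrefl)
    then show ?thesis using f h0c by (intro continuous_intros) auto
  qed
  have "\<exists>g. P g \<and> (\<forall>x\<in>K. \<bar>f x / h0 x - g x\<bar> < e / M)"
  proof (rule Stone_Weierstrass_HOL[OF cK _ _ _ _ _ fc])
    show "P (\<lambda>x. c)" for c unfolding P_def using zB by force
    show "P g \<Longrightarrow> continuous_on K g" for g unfolding P_def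
      using contB by (auto intro!: continuous_intros)
    show "P g \<and> P h \<Longrightarrow> P (\<lambda>x. g x + h x)" for g h unfolding P_def
    proof (elim conjE exE)
      fix c1 h1 c2 h2 assume "h1 \<in> B" "g = (\<lambda>x. c1 + h1 x)" "h2 \<in> B" "h = (\<lambda>x. c2 + h2 x)"
      then show "\<exists>c h'. h' \<in> B \<and> (\<lambda>x. g x + h x) = (\<lambda>x. c + h' x)"
        by (intro exI[of _ "c1 + c2"] exI[of _ "\<lambda>x. h1 x + h2 x"]) (auto simp: addB)
    qed
    show "P g \<and> P h \<Longrightarrow> P (\<lambda>x. g x * h x)" for g h unfolding P_def
    proof (elim conjE exE)
      fix c1 h1 c2 h2 assume H: "h1 \<in> B" "g = (\<lambda>x. c1 + h1 x)" "h2 \<in> B" "h = (\<lambda>x. c2 + h2 x)"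
      have "(\<lambda>x. c1 * h2 x + c2 * h1 x + h1 x * h2 x) \<in> B"
        using H by (intro addB scalB multB)
      then show "\<exists>c h'. h' \<in> B \<and> (\<lambda>x. g x * h x) = (\<lambda>x. c + h' x)"
        using H by (intro exI[of _ "c1 * c2"] exI[of _ "\<lambda>x. c1 * h2 x + c2 * h1 x + h1 x * h2 x"])
          (auto simp: algebra_simps)
    qed
    show "\<exists>g. P g \<and> g x \<noteq> g y" if xy: "x \<in> K \<and> y \<in> K \<and> x \<noteq> y" for x y
    proof -
      obtain g where g: "g \<in> A" "g x \<noteq> g y" using sep xy by blast
      then have "Re (g x) \<noteq> Re (g y) \<or> Im (g x) \<noteq> Im (g y)" by (simp add: complex_eq_iff)
      then show ?thesis
      proof
        assume "Re (g x) \<noteq> Re (g y)"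
        then show ?thesis unfolding P_def using ReB[OF g(1)]
          by (intro exI[of _ "\<lambda>z. Re (g z)"]) force
      next
        assume "Im (g x) \<noteq> Im (g y)"
        then show ?thesis unfolding P_def using ImB[OF g(1)]
          by (intro exI[of _ "\<lambda>z. Im (g z)"]) force
      qed
    qed
    show "0 < e / M" using e M by simp
  qed
  then obtain c h where ch: "h \<in> B" "\<forall>x\<in>K. \<bar>f x / h0 x - (c + h x)\<bar> < e / M"
    unfolding P_def by blast
  define r where "r = (\<lambda>x. c * h0 x + h0 x * h x)"
  have rB: "r \<in> B" unfolding r_def using ch(1) h0B by (intro addB scalB multB)
  have "\<forall>x\<in>K. \<bar>f x - r x\<bar> < e"
  proof
    fix x assume x: "x \<in> K"
    have hp: "h0 x > 0" using h0pos[OF x] .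
    have "f x - r x = h0 x * (f x / h0 x - (c + h x))" unfolding r_def using hp
      by (simp add: field_simps)
    then have "\<bar>f x - r x\<bar> = h0 x * \<bar>f x / h0 x - (c + h x)\<bar>" using hp by (simp add: abs_mult)
    also have "\<dots> \<le> M * \<bar>f x / h0 x - (c + h x)\<bar>" using M(2)[OF x] hp
      by (intro mult_right_mono) auto
    also have "\<dots> < M * (e / M)" using ch(2) x M(1) by (intro mult_strict_left_mono) auto
    also have "\<dots> = e" using M(1) by simp
    finally show "\<bar>f x - r x\<bar> < e" .
  qed
  then show ?thesis using rB unfolding B_def by blast
qed

theorem corollary1:
  fixes K K0 :: "'a::t2_space set" and A :: "('a \<Rightarrow> complex) set"
  assumes "compact K"
    and "\<exists>x\<in>K. \<exists>y\<in>K. x \<noteq> y"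
    and "csubalgebra K A" and "A \<noteq> {}"
    and "K0 \<subseteq> K"
    and "\<forall>f. continuous_on K f \<longrightarrow> (\<forall>x\<in>K0. \<forall>y\<in>K0. \<exists>F::nat \<Rightarrow> 'a \<Rightarrow> complex.
            (\<forall>n. F n \<in> A) \<and> (\<lambda>n. F n x) \<longlonglongrightarrow> f x \<and> (\<lambda>n. F n y) \<longlonglongrightarrow> f y)"
    and "\<forall>x\<in>K - K0. \<forall>y\<in>K - K0. x \<noteq> y \<longrightarrow> (\<exists>g\<in>A. g x \<noteq> g y)"
    and "\<forall>x\<in>K0. \<forall>y\<in>K. x \<noteq> y \<longrightarrow> (\<exists>g\<in>A. g x \<noteq> g y)"
    and "(\<forall>x\<in>K - K0. \<exists>g\<in>A. g x \<noteq> 0) \<or> (\<forall>c. (\<lambda>x. c) \<in> A)"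
    and "\<forall>g\<in>A. (\<lambda>x. cnj (g x)) \<in> A"
  shows "uniformly_dense K A"
proof -
  note a = assms
  have sep: "\<exists>g\<in>A. g x \<noteq> g y" if "x \<in> K" "y \<in> K" "x \<noteq> y" for x y
  proof (cases "x \<in> K0")
    case True then show ?thesis using a(8) that by blast
  next
    case False
    show ?thesis
    proof (cases "y \<in> K0")
      case True
      then have "\<exists>g\<in>A. g y \<noteq> g x" using a(8)[rule_format, OF True that(1)] that(3) by auto
      then show ?thesis by metis
    next
      case False
      then show ?thesis using \<open>x \<notin> K0\<close> a(7) that by blast
    qed
  qed
  have nz: "\<exists>g\<in>A. g x \<noteq> 0" if x: "x \<in> K" for x
  proof (cases "x \<in> K0")
    case True
    have "continuous_on K (\<lambda>_. 1::complex)" by simp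
    then obtain F where F: "\<forall>n. F n \<in> A" "(\<lambda>n. F n x) \<longlonglongrightarrow> 1"
      using a(6) True by blast
    show ?thesis
    proof (rule ccontr)
      assume "\<not> ?thesis"
      then have "(\<lambda>n. F n x) = (\<lambda>n. 0)" using F(1) by auto
      then have "(\<lambda>n. F n x) \<longlonglongrightarrow> 0" by simp
      then show False using F(2) LIMSEQ_unique by fastforce
    qed
  next
    case False
    show ?thesis
    proof (cases "\<forall>c. (\<lambda>x. c) \<in> A")
      case True then show ?thesis by (intro bexI[of _ "\<lambda>_. 1"]) auto
    next
      case False then show ?thesis using a(9) x \<open>x \<notin> K0\<close> by blast
    qed
  qed
  show ?thesis unfolding uniformly_dense_def
  proof (intro allI impI)
    fix f :: "'a \<Rightarrow> complex" and e :: real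
    assume f: "continuous_on K f" and e: "e > 0"
    show "\<exists>g\<in>A. \<forall>x\<in>K. cmod (f x - g x) < e"
    proof -
      have fr: "continuous_on K (\<lambda>x. Re (f x))" "continuous_on K (\<lambda>x. Im (f x))"
        using f by (auto intro: continuous_intros)
      obtain h1 where h1: "(\<lambda>x. complex_of_real (h1 x)) \<in> A" "\<forall>x\<in>K. \<bar>Re (f x) - h1 x\<bar> < e/2"
        using corollary1_real[OF a(1) a(3) a(4) sep nz a(10) fr(1), of "e/2"] e by auto
      obtain h2 where h2: "(\<lambda>x. complex_of_real (h2 x)) \<in> A" "\<forall>x\<in>K. \<bar>Im (f x) - h2 x\<bar> < e/2"
        using corollary1_real[OF a(1) a(3) a(4) sep nz a(10) fr(2), of "e/2"] e by auto
      have sc: "\<forall>c. \<forall>f\<in>A. (\<lambda>x. c * f x) \<in> A" and ad: "\<forall>f\<in>A. \<forall>g\<in>A. (\<lambda>x. f x + g x) \<in> A"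
        using a(3) unfolding csubalgebra_def by blast+
      have "(\<lambda>x. \<i> * complex_of_real (h2 x)) \<in> A"
        using sc[rule_format, OF h2(1), of "\<i>"] .
      then have "(\<lambda>x. complex_of_real (h1 x) + \<i> * complex_of_real (h2 x)) \<in> A"
        using ad[rule_format, OF h1(1)] by blast
      moreover have "\<forall>x\<in>K. cmod (f x - (complex_of_real (h1 x) + \<i> * complex_of_real (h2 x))) < e"
      proof
        fix x assume x: "x \<in> K"
        have "cmod (f x - (complex_of_real (h1 x) + \<i> * complex_of_real (h2 x)))
              \<le> \<bar>Re (f x) - h1 x\<bar> + \<bar>Im (f x) - h2 x\<bar>"
          using cmod_le[of "f x - (complex_of_real (h1 x) + \<i> * complex_of_real (h2 x))"] by simp
        also have "\<dots> < e" using h1(2) h2(2) x by fastforce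
        finally show "cmod (f x - (complex_of_real (h1 x) + \<i> * complex_of_real (h2 x))) < e" .
      qed
      ultimately show "\<exists>g\<in>A. \<forall>x\<in>K. cmod (f x - g x) < e"
        apply -
        apply (rule bexI[of _ "\<lambda>x. complex_of_real (h1 x) + \<i> * complex_of_real (h2 x)"])
        apply simp_all
        done
    qed
  qed
qed

end
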